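(* Let $(\mathbf{M},\mathcal{B},\mu,f)$ be a measure preserving system and $\varphi:\mathbf{M}\to\mathbb{R}\cup\{\pm\infty\}$ a continuous function. Let $X_j=\varphi\circ f^j$. Let $(u_n)$ be a non-decreasing sequence of real numbers and $(w_n)$ a non-decreasing sequence of integers such that $w_n\,\mu(X_0>u_n)\to\tau$ as $n\to\infty$ for some real number $\tau>0$. Put $U_n=\{X_0>u_n\}$. Then the following statements are equivalent: (1) there exists a probability distribution $m$ on $\mathbb{N}_0$ such that $\mu(\xi^{w_n}_{u_n}=k)\to m(\{k\})$ as $n\to\infty$ for every $k\in\mathbb{N}_0$; (2) there exists a probability distribution $m$ on $\mathbb{N}_0$ such that $\mu\big(\zeta^{\tau/\mu(U_n)}_{U_n}=k\big)\to m(\{k\})$ as $n\to\infty$ for every $k\in\mathbb{N}_0$.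
   Context: Here $\mathbf{M}$ is a compact Riemannian manifold, $f$ a differentiable map, $\mathcal B$ the Borel $\sigma$-algebra and $\mu$ an $f$-invariant probability measure. The rare event process is $\xi^N_{u_n}=\sum_{k=0}^{N-1}\mathbb{I}_{\{X_k>u_n\}}$, and for a set $U$ and $N>0$ the entry count is $\zeta^N_U=\sum_{0\le k<N}\mathbb{I}_U\circ f^k$ (for non-integer $N$ the sum runs over integers $0\le k<N$). $\mathbb I$ denotes the indicator function. *)

theory Defs
  imports "HOL-Probability.Probability"
begin

definition rare_event_process :: "('a \<Rightarrow> 'a) \<Rightarrow> ('a \<Rightarrow> ereal) \<Rightarrow> real \<Rightarrow> int \<Rightarrow> 'a \<Rightarrow> nat" where
  "rare_event_process f \<phi> u N x =
     (\<Sum>k\<in>{k::nat. int k < N}. indicator {y. \<phi> y > ereal u} ((f ^^ k) x))"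

definition entry_count :: "('a \<Rightarrow> 'a) \<Rightarrow> 'a set \<Rightarrow> real \<Rightarrow> 'a \<Rightarrow> nat" where
  "entry_count f U N x = (\<Sum>k\<in>{k::nat. real k < N}. indicator U ((f ^^ k) x))"

end

theory Submission
  imports Defs
begin


lemma funpow_meas: "f \<in> measurable M M \<Longrightarrow> (f ^^ j) \<in> measurable M M"
  by (induction j) (auto intro: measurable_comp)

lemma funpow_pres:
  assumes fm: "f \<in> measurable M M" and fp: "distr M M f = M" and A: "A \<in> sets M"
  shows "measure M ((f ^^ j) -` A \<inter> space M) = measure M A"
proof (induction j)
  case 0 then show ?case using sets.sets_into_space[OF A] by (simp add: Int_absorb2)
next
  case (Suc j)
  have B: "(f ^^ j) -` A \<inter> space M \<in> sets M" using funpow_meas[OF fm] A by (rule measurable_sets)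
  have "(f ^^ Suc j) -` A \<inter> space M = f -` ((f ^^ j) -` A \<inter> space M) \<inter> space M"
    using measurable_space[OF fm] by (auto simp del: funpow.simps simp add: funpow_Suc_right)
  also have "measure M \<dots> = measure (distr M M f) ((f ^^ j) -` A \<inter> space M)"
    using measure_distr[OF fm B] by simp
  also have "\<dots> = measure M A" using fp Suc by simp
  finally show ?case .
qed

lemma close_lim:
  fixes a b e :: "nat \<Rightarrow> real"
  assumes "\<And>n. \<bar>a n - b n\<bar> \<le> e n" "e \<longlonglongrightarrow> 0" "b \<longlonglongrightarrow> l"
  shows "a \<longlonglongrightarrow> l"
proof -
  have "(\<lambda>n. a n - b n) \<longlonglongrightarrow> 0"
  proof (rule tendsto_sandwich[of "\<lambda>n. - e n" _ _ e])
    show "\<forall>\<^sub>F n in sequentially. - e n \<le> a n - b n" using assms(1) by (intro always_eventually allI) (smt (verit))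
    show "\<forall>\<^sub>F n in sequentially. a n - b n \<le> e n" using assms(1) by (intro always_eventually allI) (smt (verit))
    show "(\<lambda>n. - e n) \<longlonglongrightarrow> 0" using tendsto_minus[OF assms(2)] by simp
  qed (rule assms(2))
  from tendsto_add[OF this assms(3)] show ?thesis by simp
qed

lemma sum_eq_outside:
  fixes g :: "nat \<Rightarrow> nat"
  assumes "finite A" "finite B" "\<And>j. j \<in> A - B \<union> (B - A) \<Longrightarrow> g j = 0"
  shows "sum g A = sum g B"
proof -
  have "sum g A = sum g (A \<union> B)" by (rule sum.mono_neutral_left) (use assms in auto)
  also have "\<dots> = sum g B" by (rule sum.mono_neutral_right) (use assms in auto)
  finally show ?thesis .
qed

lemma card_D:
  fixes w :: int and t :: real
  shows "card {k::nat. (int k < w) \<noteq> (real k < t)} \<le> nat \<bar>w - \<lceil>t\<rceil>\<bar>"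
proof -
  let ?c = "\<lceil>t\<rceil>"
  have "{k::nat. (int k < w) \<noteq> (real k < t)} \<subseteq> nat ` {min w ?c..<max w ?c}"
  proof
    fix k assume "k \<in> {k::nat. (int k < w) \<noteq> (real k < t)}"
    then have "int k \<in> {min w ?c..<max w ?c}"
      by (auto simp: ceiling_le_iff less_ceiling_iff)
    then show "k \<in> nat ` {min w ?c..<max w ?c}" by (intro image_eqI[of _ _ "int k"]) auto
  qed
  then have "card {k::nat. (int k < w) \<noteq> (real k < t)} \<le> card (nat ` {min w ?c..<max w ?c})"
    by (intro card_mono) auto
  also have "\<dots> \<le> card {min w ?c..<max w ?c}" by (rule card_image_le) auto
  also have "\<dots> = nat \<bar>w - ?c\<bar>" by auto
  finally show ?thesis .
qed


lemma meas_test: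
  assumes fm: "f \<in> measurable M M" and U: "U \<in> sets M" and fin: "finite S"
  shows "(\<lambda>x. (\<Sum>k\<in>S. indicator U ((f ^^ k) x)) :: nat) \<in> measurable M (count_space UNIV)"
proof -
  have "\<And>k. (\<lambda>x. indicator U ((f ^^ k) x) :: nat) \<in> measurable M (count_space UNIV)"
  proof -
    fix k
    have g: "(f ^^ k) \<in> measurable M M" by (rule funpow_meas[OF fm])
    have "(\<lambda>x. indicator U ((f ^^ k) x) :: nat) = (\<lambda>x. if (f ^^ k) x \<in> U then 1 else 0)"
      by (auto simp: indicator_def)
    also have "\<dots> \<in> measurable M (count_space UNIV)"
      using g U by measurable
    finally show "(\<lambda>x. indicator U ((f ^^ k) x) :: nat) \<in> measurable M (count_space UNIV)" .
  qed
  then show ?thesis by measurable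
qed



theorem theoremC:
  fixes M :: "'a::metric_space measure"
    and f :: "'a \<Rightarrow> 'a"
    and \<phi> :: "'a \<Rightarrow> ereal"
    and u :: "nat \<Rightarrow> real"
    and w :: "nat \<Rightarrow> int"
    and \<tau> :: real
  assumes compact_space: "compact (UNIV :: 'a set)"
    and borel_sets: "sets M = sets borel"
    and prob: "prob_space M"
    and f_cont: "continuous_on UNIV f"
    and f_meas: "f \<in> measurable M M"
    and f_pres: "distr M M f = M"
    and phi_cont: "continuous_on UNIV \<phi>"
    and u_mono: "mono u"
    and w_mono: "mono w"
    and tau_pos: "\<tau> > 0"
    and lim: "(\<lambda>n. real_of_int (w n) * measure M {x. \<phi> x > ereal (u n)}) \<longlonglongrightarrow> \<tau>"
  shows "(\<exists>m :: nat pmf. \<forall>k. (\<lambda>n. measure M {x. rare_event_process f \<phi> (u n) (w n) x = k})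
              \<longlonglongrightarrow> pmf m k)
     \<longleftrightarrow> (\<exists>m :: nat pmf. \<forall>k. (\<lambda>n. measure M {x. entry_count f {y. \<phi> y > ereal (u n)}
                  (\<tau> / measure M {y. \<phi> y > ereal (u n)}) x = k}) \<longlonglongrightarrow> pmf m k)"
proof -
  interpret prob_space M by (rule prob)
  have spM: "space M = UNIV" using sets_eq_imp_space_eq[OF borel_sets] by simp
  define U where "U n = {y. \<phi> y > ereal (u n)}" for n
  define P where "P n = measure M (U n)" for n
  define c where "c n = \<lceil>\<tau> / P n\<rceil>" for n
  define e where "e n = P n * \<bar>real_of_int (w n - c n)\<bar>" for n
  define \<xi> where "\<xi> n x = rare_event_process f \<phi> (u n) (w n) x" for n x
  define \<zeta> where "\<zeta> n x = entry_count f (U n) (\<tau> / P n) x" for n x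
  have Usets: "U n \<in> sets M" for n
  proof -
    have "open (U n)" unfolding U_def
      by (rule open_Collect_less) (auto intro: phi_cont continuous_on_const)
    then show ?thesis using borel_sets by (simp add: borel_open)
  qed
  have P_nonneg: "P n \<ge> 0" for n by (simp add: P_def)
  have fin1: "finite {k::nat. int k < N}" for N
    by (rule finite_subset[of _ "{..<nat N}"]) auto
  have fin2: "finite {k::nat. real k < t}" for t
  proof (rule finite_subset[of _ "{..<nat \<lceil>t\<rceil>}"])
    show "{k::nat. real k < t} \<subseteq> {..<nat \<lceil>t\<rceil>}"
    proof
      fix x assume "x \<in> {k::nat. real k < t}"
      then have "real x < t" by simp
      then have "int x < \<lceil>t\<rceil>" by (simp add: less_ceiling_iff)
      then show "x \<in> {..<nat \<lceil>t\<rceil>}" by simp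
    qed
  qed simp
  have xi_meas: "\<xi> n \<in> measurable M (count_space UNIV)" for n
    unfolding \<xi>_def rare_event_process_def U_def[symmetric]
    by (rule meas_test[OF f_meas Usets fin1])
  have zeta_meas: "\<zeta> n \<in> measurable M (count_space UNIV)" for n
    unfolding \<zeta>_def entry_count_def
    by (rule meas_test[OF f_meas Usets fin2])
  have xi_sets: "{x. \<xi> n x = k} \<in> sets M" for n k
    using measurable_sets[OF xi_meas, of "{k}" n] by (simp add: spM vimage_def)
  have zeta_sets: "{x. \<zeta> n x = k} \<in> sets M" for n k
    using measurable_sets[OF zeta_meas, of "{k}" n] by (simp add: spM vimage_def)
  have key: "\<bar>measure M {x. \<xi> n x = k} - measure M {x. \<zeta> n x = k}\<bar> \<le> e n" for n k
  proof -
    define D where "D = {k::nat. (int k < w n) \<noteq> (real k < \<tau> / P n)}"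
    define E where "E = (\<Union>j\<in>D. (f ^^ j) -` U n \<inter> space M)"
    have finD: "finite D"
      by (rule finite_subset[of _ "{k::nat. int k < w n} \<union> {k::nat. real k < \<tau> / P n}"])
         (auto simp: D_def fin1 fin2)
    have Esets: "E \<in> sets M" unfolding E_def
      using finD measurable_sets[OF funpow_meas[OF f_meas] Usets] by (intro sets.finite_UN) auto
    have "measure M E \<le> (\<Sum>j\<in>D. measure M ((f ^^ j) -` U n \<inter> space M))"
      unfolding E_def
      by (rule measure_UNION_le[OF finD]) (rule measurable_sets[OF funpow_meas[OF f_meas] Usets])
    also have "\<dots> = real (card D) * P n"
      using funpow_pres[OF f_meas f_pres Usets] by (simp add: P_def)
    also have "\<dots> \<le> e n"
    proof -
      have "card D \<le> nat \<bar>w n - c n\<bar>" unfolding D_def c_def by (rule card_D)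
      then have "real (card D) \<le> \<bar>real_of_int (w n - c n)\<bar>"
        by (metis of_int_abs of_nat_mono nat_0_le abs_ge_zero of_int_of_nat_eq order.trans
            of_nat_nat zle_int)
      then show ?thesis unfolding e_def using P_nonneg
        by (simp add: mult.commute mult_left_mono)
    qed
    finally have Ele: "measure M E \<le> e n" .
    have eq: "\<xi> n x = \<zeta> n x" if "x \<notin> E" for x
    proof -
      have "(\<Sum>j\<in>{k::nat. int k < w n}. indicator (U n) ((f ^^ j) x) :: nat)
          = (\<Sum>j\<in>{k::nat. real k < \<tau> / P n}. indicator (U n) ((f ^^ j) x))"
        by (rule sum_eq_outside[OF fin1 fin2]) (use that in \<open>auto simp: E_def D_def spM\<close>)
      then show ?thesis unfolding \<xi>_def \<zeta>_def rare_event_process_def entry_count_def U_def .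
    qed
    have s1: "{x. \<xi> n x = k} \<subseteq> {x. \<zeta> n x = k} \<union> E" using eq by auto
    have s2: "{x. \<zeta> n x = k} \<subseteq> {x. \<xi> n x = k} \<union> E" using eq by auto
    have "measure M {x. \<xi> n x = k} \<le> measure M {x. \<zeta> n x = k} + measure M E"
      using finite_measure_mono[OF s1] measure_Un_le[OF zeta_sets Esets] Esets zeta_sets
      by (meson order.trans sets.Un)
    moreover have "measure M {x. \<zeta> n x = k} \<le> measure M {x. \<xi> n x = k} + measure M E"
      using finite_measure_mono[OF s2] measure_Un_le[OF xi_sets Esets] Esets xi_sets
      by (meson order.trans sets.Un)
    ultimately show ?thesis using Ele by linarith
  qed
  have e_lim: "e \<longlonglongrightarrow> 0"
  proof -
    have lim': "(\<lambda>n. real_of_int (w n) * P n) \<longlonglongrightarrow> \<tau>" using lim unfolding P_def U_def .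
    have r0: "(\<lambda>n. \<bar>real_of_int (w n) * P n - \<tau>\<bar>) \<longlonglongrightarrow> 0"
    proof -
      have "(\<lambda>n. real_of_int (w n) * P n - \<tau>) \<longlonglongrightarrow> \<tau> - \<tau>" by (intro tendsto_intros lim')
      then show ?thesis using tendsto_rabs_zero by fastforce
    qed
    have e_nonneg: "e n \<ge> 0" for n using P_nonneg by (simp add: e_def)
    have dec: "decseq P"
    proof (rule decseq_SucI)
      fix n
      have "ereal (u n) \<le> ereal (u (Suc n))" using u_mono by (simp add: mono_def)
      then have "U (Suc n) \<subseteq> U n"
        unfolding U_def using le_less_trans by blast
      then show "P (Suc n) \<le> P n" unfolding P_def by (rule finite_measure_mono) (rule Usets)
    qed
    obtain L where PL: "P \<longlonglongrightarrow> L" and Lle: "\<forall>i. L \<le> P i"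
      using decseq_convergent[OF dec, of 0] P_nonneg by blast
    have L0: "L \<ge> 0" using PL P_nonneg by (intro LIMSEQ_le_const) auto
    have gen: "e n \<le> \<bar>real_of_int (w n) * P n - \<tau>\<bar> + P n" for n
    proof (cases "P n = 0")
      case True then show ?thesis by (simp add: e_def)
    next
      case False
      then have Pp: "P n > 0" using P_nonneg[of n] by simp
      define t where "t = \<tau> / P n"
      have ct: "t \<le> c n" "c n < t + 1" unfolding c_def t_def by linarith+
      have "\<bar>real_of_int (w n - c n)\<bar> \<le> \<bar>real_of_int (w n) - t\<bar> + 1" using ct by simp
      then have "e n \<le> P n * (\<bar>real_of_int (w n) - t\<bar> + 1)"
        unfolding e_def using Pp by (intro mult_left_mono) auto
      also have "\<dots> = \<bar>P n * real_of_int (w n) - P n * t\<bar> + P n"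
      proof -
        have "P n * \<bar>real_of_int (w n) - t\<bar> = \<bar>P n * (real_of_int (w n) - t)\<bar>"
          using Pp by (simp add: abs_mult)
        then show ?thesis by (simp add: right_diff_distrib distrib_left mult.commute)
      qed
      also have "P n * t = \<tau>" using Pp by (simp add: t_def)
      finally show ?thesis by (simp add: mult.commute)
    qed
    show ?thesis
    proof (cases "L = 0")
      case True
      have "(\<lambda>n. \<bar>real_of_int (w n) * P n - \<tau>\<bar> + P n) \<longlonglongrightarrow> 0 + 0"
        using PL True by (intro tendsto_add r0) auto
      then have h: "(\<lambda>n. \<bar>real_of_int (w n) * P n - \<tau>\<bar> + P n) \<longlonglongrightarrow> 0" by simp
      show ?thesis
      proof (rule tendsto_sandwich[OF _ _ tendsto_const h])
        show "\<forall>\<^sub>F n in sequentially. 0 \<le> e n" using e_nonneg by (intro always_eventually) blast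
        show "\<forall>\<^sub>F n in sequentially. e n \<le> \<bar>real_of_int (w n) * P n - \<tau>\<bar> + P n"
          using gen by (intro always_eventually) blast
      qed
    next
      case False
      then have Lp: "L > 0" using L0 by simp
      have Ppos: "P n > 0" for n using Lle Lp by (meson less_le_trans)
      have wlim: "(\<lambda>n. real_of_int (w n)) \<longlonglongrightarrow> \<tau> / L"
      proof -
        have "(\<lambda>n. real_of_int (w n) * P n / P n) \<longlonglongrightarrow> \<tau> / L"
          using Lp by (intro tendsto_divide lim' PL) auto
        moreover have "(\<lambda>n. real_of_int (w n) * P n / P n) = (\<lambda>n. real_of_int (w n))"
          using Ppos by (auto intro!: ext simp: less_imp_neq[symmetric])
        ultimately show ?thesis by simp
      qed
      have incw: "incseq (\<lambda>n. real_of_int (w n))" using w_mono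
        by (simp add: incseq_def mono_def)
      have wle: "real_of_int (w n) \<le> \<tau> / L" for n by (rule incseq_le[OF incw wlim])
      have "\<forall>\<^sub>F n in sequentially. real_of_int (w n) > \<tau> / L - 1"
        using wlim by (rule order_tendstoD) simp
      then obtain N where N: "\<And>n. n \<ge> N \<Longrightarrow> real_of_int (w n) > \<tau> / L - 1"
        by (auto simp: eventually_sequentially)
      have wconst: "w n = w N" if "n \<ge> N" for n
      proof -
        have "w N \<le> w n" using w_mono that by (simp add: mono_def)
        moreover have "real_of_int (w n) < real_of_int (w N) + 1" using wle[of n] N[of N] by simp
        ultimately show ?thesis by linarith
      qed
      have "(\<lambda>n. real_of_int (w n)) \<longlonglongrightarrow> real_of_int (w N)"
      proof (rule tendsto_eventually)
        show "\<forall>\<^sub>F n in sequentially. real_of_int (w n) = real_of_int (w N)"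
          unfolding eventually_sequentially using wconst by metis
      qed
      then have tauL: "\<tau> / L = real_of_int (w N)" using wlim LIMSEQ_unique by blast
      have ev: "e n \<le> \<bar>real_of_int (w n) * P n - \<tau>\<bar>" if "n \<ge> N" for n
      proof -
        have "\<tau> / P n \<le> \<tau> / L" using Lle Lp tau_pos Ppos[of n] by (intro divide_left_mono) auto
        then have "\<tau> / P n \<le> real_of_int (w n)" using tauL wconst[OF that] by metis
        then have cw: "c n \<le> w n" unfolding c_def by (simp add: ceiling_le_iff)
        have ct: "\<tau> / P n \<le> c n" unfolding c_def by linarith
        have "e n = P n * (real_of_int (w n) - c n)" unfolding e_def using cw by simp
        also have "\<dots> \<le> P n * (real_of_int (w n) - \<tau> / P n)"
          using ct Ppos[of n] by (intro mult_left_mono) auto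
        also have "\<dots> = real_of_int (w n) * P n - \<tau>" using Ppos[of n] by (simp add: algebra_simps)
        finally show ?thesis by simp
      qed
      show ?thesis
      proof (rule tendsto_sandwich[OF _ _ tendsto_const r0])
        show "\<forall>\<^sub>F n in sequentially. 0 \<le> e n" using e_nonneg by (intro always_eventually) blast
        show "\<forall>\<^sub>F n in sequentially. e n \<le> \<bar>real_of_int (w n) * P n - \<tau>\<bar>"
          unfolding eventually_sequentially using ev by blast
      qed
    qed
  qed
  show ?thesis
  proof
    assume "\<exists>m :: nat pmf. \<forall>k. (\<lambda>n. measure M {x. rare_event_process f \<phi> (u n) (w n) x = k})
              \<longlonglongrightarrow> pmf m k"
    then obtain m :: "nat pmf" where m: "\<And>k. (\<lambda>n. measure M {x. \<xi> n x = k}) \<longlonglongrightarrow> pmf m k"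
      unfolding \<xi>_def by blast
    have "(\<lambda>n. measure M {x. \<zeta> n x = k}) \<longlonglongrightarrow> pmf m k" for k
      by (rule close_lim[OF _ e_lim m]) (metis abs_minus_commute key)
    then show "\<exists>m :: nat pmf. \<forall>k. (\<lambda>n. measure M {x. entry_count f {y. \<phi> y > ereal (u n)}
                  (\<tau> / measure M {y. \<phi> y > ereal (u n)}) x = k}) \<longlonglongrightarrow> pmf m k"
      unfolding \<zeta>_def P_def U_def by blast
  next
    assume "\<exists>m :: nat pmf. \<forall>k. (\<lambda>n. measure M {x. entry_count f {y. \<phi> y > ereal (u n)}
                  (\<tau> / measure M {y. \<phi> y > ereal (u n)}) x = k}) \<longlonglongrightarrow> pmf m k"
    then obtain m :: "nat pmf" where m: "\<And>k. (\<lambda>n. measure M {x. \<zeta> n x = k}) \<longlonglongrightarrow> pmf m k"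
      unfolding \<zeta>_def P_def U_def by blast
    have "(\<lambda>n. measure M {x. \<xi> n x = k}) \<longlonglongrightarrow> pmf m k" for k
      by (rule close_lim[OF _ e_lim m]) (rule key)
    then show "\<exists>m :: nat pmf. \<forall>k. (\<lambda>n. measure M {x. rare_event_process f \<phi> (u n) (w n) x = k})
              \<longlonglongrightarrow> pmf m k"
      unfolding \<xi>_def by blast
  qed
qed
end
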